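(* Let $D$ be the clover-improved Wilson Dirac operator, let $\{\mathcal{A}_1,\dots,\mathcal{A}_s\}$ be a $\Gamma_5$-compatible aggregation, let $P$ be the corresponding aggregation-based prolongation built from test vectors $v_1,\dots,v_N$ (as in the context), and let $R=(\Gamma_5P)^H$. Consider the two coarse grid operators $D_c^{PG}=RDP$ and $D_c=P^HDP$. Then: (i) $D_c=\Gamma_5^cD_c^{PG}$; (ii) $I-PD_c^{-1}P^HD=I-P(D_c^{PG})^{-1}RD$ (whenever these inverses exist); (iii) $D_c^{PG}$ is hermitian, and $D_c$ is $\Gamma_5^c$-symmetric, i.e. $(\Gamma_5^cD_c)^H=\Gamma_5^cD_c$; (iv) for the fields of values, $\mathcal{F}(D_c)\subseteq\mathcal{F}(D)$, where $\mathcal{F}(A)=\{\psi^HA\psi:\psi^H\psi=1\}$.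
   Context: Let $\mathcal{L}$ be a periodic four-dimensional $N_t\times N_s^3$ lattice with $n_{\mathcal{L}}$ sites and shift vectors $\hat\mu$ ($\mu=0,\dots,3$, spacing $a$). Let $\mathcal{C}=\{1,2,3\}$ (colors), $\mathcal{S}=\{0,1,2,3\}$ (spins), and $\mathcal{V}=\mathcal{L}\times\mathcal{C}\times\mathcal{S}$ the set of $n=12n_{\mathcal{L}}$ variables; vectors in $\mathbb{C}^n$ are fields $\psi(x)\in\mathbb{C}^4\otimes\mathbb{C}^3$. A configuration consists of $U_\mu(x)\in\mathrm{SU}(3)$. The matrices $\gamma_0,\dots,\gamma_3\in\mathbb{C}^{4\times4}$ are hermitian, unitary, with $\gamma_\mu\gamma_\nu+\gamma_\nu\gamma_\mu=2\delta_{\mu\nu}I_4$, and $\gamma_5=\gamma_0\gamma_1\gamma_2\gamma_3=\mathrm{diag}(1,1,-1,-1)$ (acting as $+1$ on spins 0,1 and $-1$ on spins 2,3). The clover-improved Wilson Dirac operator $D$ (real parameters $m_0,c_{sw}$) is $(D\psi)(x)=\Big(\tfrac{m_0+4}{a}I_{12}-\tfrac{c_{sw}}{32a}\sum_{\mu,\nu}(\gamma_\mu\gamma_\nu)\otimes(Q_{\mu\nu}(x)-Q_{\nu\mu}(x))\Big)\psi(x)-\tfrac{1}{2a}\sum_{\mu}\big((I_4-\gamma_\mu)\otimes U_\mu(x)\big)\psi(x+\hat\mu)-\tfrac{1}{2a}\sum_{\mu}\big((I_4+\gamma_\mu)\otimes U_\mu(x-\hat\mu)^H\big)\psi(x-\hat\mu)$,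 with $Q_{\mu\nu}(x)$ the sum of the four oriented plaquette products of links around $x$ in the $\mu\nu$-plane. With $\Gamma_5=I_{n_{\mathcal{L}}}\otimes\gamma_5\otimes I_3$, $D$ satisfies $(\Gamma_5D)^H=\Gamma_5D$. An aggregation is a partition $\{\mathcal{A}_1,\dots,\mathcal{A}_s\}$ of $\mathcal{V}$; it is $\Gamma_5$-compatible if each $\mathcal{A}_i$ consists exclusively of variables with spin in $\{0,1\}$ or exclusively of variables with spin in $\{2,3\}$. Given test vectors $v_1,\dots,v_N\in\mathbb{C}^n$, let $\mathcal{I}_{\mathcal{A}_i}^Tv$ denote the vector agreeing with $v$ on $\mathcal{A}_i$ and zero elsewhere. The aggregation-based prolongation $P\in\mathbb{C}^{n\times sN}$ has, for each $i$, columns $(i-1)N+1,\dots,iN$ equal to an orthonormal basis of $\mathrm{span}(\mathcal{I}_{\mathcal{A}_i}^Tv_1,\dots,\mathcal{I}_{\mathcal{A}_i}^Tv_N)$ (these restrictions being linearly independent); thus each column of $P$ is supported in a single aggregate and $P^HP=I$. $\Gamma_5^c$ is the $sN\times sN$ diagonal matrix with entry $+1$ on coarse variables belonging to aggregates of spins $\{0,1\}$ and $-1$ on those belonging to aggregates of spins $\{2,3\}$ (so that $\Gamma_5P=P\Gamma_5^c$). *)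

theory Defs
  imports "Jordan_Normal_Form.Matrix" "Jordan_Normal_Form.Determinant"
begin

definition adj :: "complex mat \<Rightarrow> complex mat" where
  "adj A = mat (dim_col A) (dim_row A) (\<lambda>(i,j). cnj (A $$ (j,i)))"

definition cinner :: "complex vec \<Rightarrow> complex vec \<Rightarrow> complex" where
  "cinner u w = (\<Sum>k<dim_vec u. cnj (u $ k) * w $ k)"

definition fov :: "complex mat \<Rightarrow> complex set" where
  "fov A = {cinner \<psi> (A *\<^sub>v \<psi>) | \<psi>. \<psi> \<in> carrier_vec (dim_col A) \<and> cinner \<psi> \<psi> = 1}"

definition SU3 :: "complex mat \<Rightarrow> bool" where
  "SU3 U \<longleftrightarrow> U \<in> carrier_mat 3 3 \<and> adj U * U = 1\<^sub>m 3 \<and> U * adj U = 1\<^sub>m 3 \<and> det U = 1"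

definition cspan :: "nat \<Rightarrow> nat \<Rightarrow> (nat \<Rightarrow> complex vec) \<Rightarrow> complex vec set" where
  "cspan n N w = {vec n (\<lambda>k. \<Sum>l<N. c l * w l $ k) | c. True}"

definition lin_indep :: "nat \<Rightarrow> nat \<Rightarrow> (nat \<Rightarrow> complex vec) \<Rightarrow> bool" where
  "lin_indep n N w \<longleftrightarrow> (\<forall>c. (\<forall>k<n. (\<Sum>l<N. c l * w l $ k) = 0) \<longrightarrow> (\<forall>l<N. c l = 0))"

text \<open>Sites are encoded by linear indices x < n_L = N_t * N_s^3; coordinate 0 (time) is the
  fastest running one. Variables (site, spin, colour) are encoded as 12*x + 3*spin + colour,
  so that psi(x) in C^4 (x) C^3 is ordered spin-major (Kronecker convention).\<close>

definition nsites :: "nat \<Rightarrow> nat \<Rightarrow> nat" where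
  "nsites Nt Ns = Nt * Ns ^ 3"

definition extent :: "nat \<Rightarrow> nat \<Rightarrow> nat \<Rightarrow> nat" where
  "extent Nt Ns \<mu> = (if \<mu> = 0 then Nt else Ns)"

definition stride :: "nat \<Rightarrow> nat \<Rightarrow> nat \<Rightarrow> nat" where
  "stride Nt Ns \<mu> = (if \<mu> = 0 then 1 else Nt * Ns ^ (\<mu> - 1))"

definition coord :: "nat \<Rightarrow> nat \<Rightarrow> nat \<Rightarrow> nat \<Rightarrow> nat" where
  "coord Nt Ns \<mu> x = (x div stride Nt Ns \<mu>) mod extent Nt Ns \<mu>"

text \<open>shift Nt Ns mu d x = x + d * hat mu (periodic), for d = 1 or d = -1.\<close>
definition shift :: "nat \<Rightarrow> nat \<Rightarrow> nat \<Rightarrow> int \<Rightarrow> nat \<Rightarrow> nat" where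
  "shift Nt Ns \<mu> d x =
     x - coord Nt Ns \<mu> x * stride Nt Ns \<mu>
       + nat ((int (coord Nt Ns \<mu> x) + d) mod int (extent Nt Ns \<mu>)) * stride Nt Ns \<mu>"

definition site_of :: "nat \<Rightarrow> nat" where "site_of k = k div 12"
definition spin_of :: "nat \<Rightarrow> nat" where "spin_of k = (k mod 12) div 3"
definition color_of :: "nat \<Rightarrow> nat" where "color_of k = k mod 3"

text \<open>U x mu is the link U_mu(x). Q_{mu nu}(x): sum of the four oriented plaquettes at x.\<close>
definition Qpl :: "nat \<Rightarrow> nat \<Rightarrow> (nat \<Rightarrow> nat \<Rightarrow> complex mat) \<Rightarrow> nat \<Rightarrow> nat \<Rightarrow> nat \<Rightarrow> complex mat" where
  "Qpl Nt Ns U \<mu> \<nu> x =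
    (let fw = (\<lambda>\<rho> y. shift Nt Ns \<rho> 1 y); bw = (\<lambda>\<rho> y. shift Nt Ns \<rho> (-1) y) in
       U x \<mu> * U (fw \<mu> x) \<nu> * adj (U (fw \<nu> x) \<mu>) * adj (U x \<nu>)
     + U x \<nu> * adj (U (bw \<mu> (fw \<nu> x)) \<mu>) * adj (U (bw \<mu> x) \<nu>) * U (bw \<mu> x) \<mu>
     + adj (U (bw \<mu> x) \<mu>) * adj (U (bw \<nu> (bw \<mu> x)) \<nu>) * U (bw \<nu> (bw \<mu> x)) \<mu> * U (bw \<nu> x) \<nu>
     + adj (U (bw \<nu> x) \<nu>) * U (bw \<nu> x) \<mu> * U (fw \<mu> (bw \<nu> x)) \<nu> * adj (U x \<mu>))"

definition dirac :: "nat \<Rightarrow> nat \<Rightarrow> real \<Rightarrow> real \<Rightarrow> real \<Rightarrow> (nat \<Rightarrow> complex mat)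
                     \<Rightarrow> (nat \<Rightarrow> nat \<Rightarrow> complex mat) \<Rightarrow> complex mat" where
  "dirac Nt Ns a m0 csw \<gamma> U =
    mat (12 * nsites Nt Ns) (12 * nsites Nt Ns) (\<lambda>(i,j).
      let x = site_of i; y = site_of j; si = spin_of i; sj = spin_of j;
          ci = color_of i; cj = color_of j in
      (if x = y then
          (if si = sj \<and> ci = cj then complex_of_real ((m0 + 4) / a) else 0)
          - complex_of_real (csw / (32 * a)) *
              (\<Sum>\<mu><4. \<Sum>\<nu><4. (\<gamma> \<mu> * \<gamma> \<nu>) $$ (si, sj) *
                  (Qpl Nt Ns U \<mu> \<nu> x - Qpl Nt Ns U \<nu> \<mu> x) $$ (ci, cj))
       else 0)
      - complex_of_real (1 / (2 * a)) *
          (\<Sum>\<mu><4. if y = shift Nt Ns \<mu> 1 x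
                   then (1\<^sub>m 4 - \<gamma> \<mu>) $$ (si, sj) * U x \<mu> $$ (ci, cj) else 0)
      - complex_of_real (1 / (2 * a)) *
          (\<Sum>\<mu><4. if y = shift Nt Ns \<mu> (-1) x
                   then (1\<^sub>m 4 + \<gamma> \<mu>) $$ (si, sj) * adj (U (shift Nt Ns \<mu> (-1) x) \<mu>) $$ (ci, cj)
                   else 0))"

text \<open>Gamma_5 = I_{n_L} (x) gamma_5 (x) I_3 with gamma_5 = gamma_0 gamma_1 gamma_2 gamma_3.\<close>
definition Gamma5 :: "nat \<Rightarrow> (nat \<Rightarrow> complex mat) \<Rightarrow> complex mat" where
  "Gamma5 nL \<gamma> = mat (12 * nL) (12 * nL) (\<lambda>(i,j).
     if site_of i = site_of j \<and> color_of i = color_of j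
     then (\<gamma> 0 * \<gamma> 1 * \<gamma> 2 * \<gamma> 3) $$ (spin_of i, spin_of j) else 0)"

definition gamma5_diag :: "complex mat" where
  "gamma5_diag = mat 4 4 (\<lambda>(i,j). if i = j then (if i < 2 then 1 else -1) else 0)"

definition gamma_matrices :: "(nat \<Rightarrow> complex mat) \<Rightarrow> bool" where
  "gamma_matrices \<gamma> \<longleftrightarrow>
     (\<forall>\<mu><4. \<gamma> \<mu> \<in> carrier_mat 4 4 \<and> adj (\<gamma> \<mu>) = \<gamma> \<mu> \<and> adj (\<gamma> \<mu>) * \<gamma> \<mu> = 1\<^sub>m 4) \<and>
     (\<forall>\<mu><4. \<forall>\<nu><4. \<gamma> \<mu> * \<gamma> \<nu> + \<gamma> \<nu> * \<gamma> \<mu> = (if \<mu> = \<nu> then 2 \<cdot>\<^sub>m 1\<^sub>m 4 else 0\<^sub>m 4 4)) \<and>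
     \<gamma> 0 * \<gamma> 1 * \<gamma> 2 * \<gamma> 3 = gamma5_diag"

definition is_aggregation :: "nat \<Rightarrow> nat \<Rightarrow> (nat \<Rightarrow> nat set) \<Rightarrow> bool" where
  "is_aggregation n s A \<longleftrightarrow>
     (\<forall>i<s. A i \<noteq> {}) \<and> (\<forall>i<s. \<forall>j<s. i \<noteq> j \<longrightarrow> A i \<inter> A j = {}) \<and>
     (\<Union>i<s. A i) = {0..<n}"

definition gamma5_compatible :: "nat \<Rightarrow> (nat \<Rightarrow> nat set) \<Rightarrow> bool" where
  "gamma5_compatible s A \<longleftrightarrow>
     (\<forall>i<s. (\<forall>k\<in>A i. spin_of k \<in> {0,1}) \<or> (\<forall>k\<in>A i. spin_of k \<in> {2,3}))"

definition restr :: "nat set \<Rightarrow> complex vec \<Rightarrow> complex vec" where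
  "restr S v = vec (dim_vec v) (\<lambda>k. if k \<in> S then v $ k else 0)"

definition is_agg_prolongation ::
  "nat \<Rightarrow> nat \<Rightarrow> (nat \<Rightarrow> nat set) \<Rightarrow> nat \<Rightarrow> (nat \<Rightarrow> complex vec) \<Rightarrow> complex mat \<Rightarrow> bool" where
  "is_agg_prolongation n s A N v P \<longleftrightarrow>
     P \<in> carrier_mat n (s * N) \<and>
     (\<forall>i<s.
        (\<forall>l<N. \<forall>l'<N. cinner (col P (i * N + l)) (col P (i * N + l')) = (if l = l' then 1 else 0)) \<and>
        cspan n N (\<lambda>l. col P (i * N + l)) = cspan n N (\<lambda>l. restr (A i) (v l)))"

definition Gamma5c :: "nat \<Rightarrow> (nat \<Rightarrow> nat set) \<Rightarrow> nat \<Rightarrow> complex mat" where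
  "Gamma5c s A N = mat (s * N) (s * N) (\<lambda>(p,q).
     if p = q then (if (\<forall>k\<in>A (p div N). spin_of k \<in> {0,1}) then 1 else -1) else 0)"

end

theory Submission
  imports Defs
begin

definition enc :: "nat \<Rightarrow> nat \<Rightarrow> (nat \<Rightarrow> nat) \<Rightarrow> nat" where
  "enc Nt Ns c = (\<Sum>\<nu><4. c \<nu> * stride Nt Ns \<nu>)"

definition bnd :: "nat \<Rightarrow> nat \<Rightarrow> (nat \<Rightarrow> nat) \<Rightarrow> bool" where
  "bnd Nt Ns c \<longleftrightarrow> (\<forall>\<nu><4. c \<nu> < extent Nt Ns \<nu>)"

lemma enc_expand: "enc Nt Ns c = c 0 + Nt * (c 1 + Ns * (c 2 + Ns * c 3))"
  by (simp add: enc_def stride_def eval_nat_numeral algebra_simps)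

lemma small_lt: "(a::nat) < m \<Longrightarrow> b < k \<Longrightarrow> a + m * b < m * k"
proof -
  assume "a < m" "b < k"
  hence "a + m * b < m * (b + 1)" by simp
  also have "\<dots> \<le> m * k" using \<open>b < k\<close> by (intro mult_le_mono2) simp
  finally show ?thesis .
qed

lemma enc_lt: assumes "bnd Nt Ns c" shows "enc Nt Ns c < nsites Nt Ns"
proof -
  have b: "c 0 < Nt" "c 1 < Ns" "c 2 < Ns" "c 3 < Ns"
    using assms(1)[unfolded bnd_def, rule_format, of 0] assms(1)[unfolded bnd_def, rule_format, of 1]
      assms(1)[unfolded bnd_def, rule_format, of 2] assms(1)[unfolded bnd_def, rule_format, of 3]
    by (simp_all add: extent_def)
  have "c 2 + Ns * c 3 < Ns * Ns" using b by (intro small_lt) auto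
  hence "c 1 + Ns * (c 2 + Ns * c 3) < Ns * (Ns * Ns)" using b by (intro small_lt) auto
  hence "c 0 + Nt * (c 1 + Ns * (c 2 + Ns * c 3)) < Nt * (Ns * (Ns * Ns))" using b by (intro small_lt) auto
  thus ?thesis by (simp add: enc_expand nsites_def eval_nat_numeral)
qed

lemma coord_enc: assumes "bnd Nt Ns c" "\<mu> < 4" shows "coord Nt Ns \<mu> (enc Nt Ns c) = c \<mu>"
proof -
  have b: "c 0 < Nt" "c 1 < Ns" "c 2 < Ns" "c 3 < Ns"
    using assms(1)[unfolded bnd_def, rule_format, of 0] assms(1)[unfolded bnd_def, rule_format, of 1]
      assms(1)[unfolded bnd_def, rule_format, of 2] assms(1)[unfolded bnd_def, rule_format, of 3]
    by (simp_all add: extent_def)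
  have d1: "enc Nt Ns c div Nt = c 1 + Ns * (c 2 + Ns * c 3)" using b
    by (simp add: enc_expand)
  have d2: "enc Nt Ns c div (Nt * Ns) = c 2 + Ns * c 3" using b
    by (simp add: d1 div_mult2_eq)
  have e: "Nt*Ns^2 = (Nt*Ns)*Ns" by (simp add: power2_eq_square)
  have "enc Nt Ns c div (Nt * Ns^2) = enc Nt Ns c div (Nt*Ns) div Ns" by (simp only: e div_mult2_eq)
  hence d3: "enc Nt Ns c div (Nt * Ns^2) = c 3" using b d2 by simp
  have "\<mu> = 0 \<or> \<mu> = 1 \<or> \<mu> = 2 \<or> \<mu> = 3" using assms by auto
  thus ?thesis
    apply (elim disjE)
    using b d1 d2 d3 by (simp_all add: coord_def stride_def extent_def enc_expand)
qed

lemma enc_coord: assumes "x < nsites Nt Ns" "Nt > 0" "Ns > 0"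
  shows "enc Nt Ns (\<lambda>\<nu>. coord Nt Ns \<nu> x) = x"
proof -
  define q1 where "q1 = x div Nt"
  define q2 where "q2 = q1 div Ns"
  define q3 where "q3 = q2 div Ns"
  have c0: "coord Nt Ns 0 x = x mod Nt" by (simp add: coord_def stride_def extent_def)
  have c1: "coord Nt Ns 1 x = q1 mod Ns" by (simp add: coord_def stride_def extent_def q1_def)
  have c2: "coord Nt Ns 2 x = q2 mod Ns" by (simp add: coord_def stride_def extent_def q1_def q2_def div_mult2_eq)
  have q3': "x div (Nt * Ns^2) = q3"
    unfolding q1_def q2_def q3_def power2_eq_square mult.assoc[symmetric] div_mult2_eq ..
  have c3': "coord Nt Ns 3 x = q3 mod Ns"
    using q3' by (simp add: coord_def stride_def extent_def)
  have "x < Nt * Ns^2 * Ns" using assms(1) by (simp add: nsites_def power3_eq_cube power2_eq_square mult.assoc)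
  moreover have "Nt * Ns^2 > 0" using assms by simp
  moreover have "x < Ns * (Nt*Ns^2)" using \<open>x < Nt * Ns^2 * Ns\<close> by (simp add: mult.commute)
  ultimately have "q3 < Ns" using q3' by (metis div_less_iff_less_mult)
  hence c3: "coord Nt Ns 3 x = q3" using c3' by simp
  have "x = x mod Nt + Nt * q1" by (simp add: q1_def)
  moreover have "q1 = q1 mod Ns + Ns * q2" by (simp add: q2_def)
  moreover have "q2 = q2 mod Ns + Ns * q3" by (simp add: q3_def)
  ultimately have "x = x mod Nt + Nt * (q1 mod Ns + Ns * (q2 mod Ns + Ns * q3))" by metis
  thus ?thesis using c1 by (simp add: enc_expand c0 c2 c3)
qed

lemma bnd_coord: "Nt > 0 \<Longrightarrow> Ns > 0 \<Longrightarrow> bnd Nt Ns (\<lambda>\<nu>. coord Nt Ns \<nu> x)"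
  by (auto simp: bnd_def coord_def extent_def)

definition newc :: "nat \<Rightarrow> nat \<Rightarrow> nat \<Rightarrow> int \<Rightarrow> nat \<Rightarrow> nat" where
  "newc Nt Ns \<mu> d c = nat ((int c + d) mod int (extent Nt Ns \<mu>))"

lemma newc_lt: "Nt > 0 \<Longrightarrow> Ns > 0 \<Longrightarrow> newc Nt Ns \<mu> d c < extent Nt Ns \<mu>"
  unfolding newc_def extent_def
  by (simp add: nat_less_iff)

lemma bnd_upd: "Nt > 0 \<Longrightarrow> Ns > 0 \<Longrightarrow> bnd Nt Ns c \<Longrightarrow> bnd Nt Ns (c(\<mu> := newc Nt Ns \<mu> d (c \<mu>)))"
  using newc_lt by (auto simp: bnd_def)

lemma enc_upd: "\<mu> < 4 \<Longrightarrow> enc Nt Ns (c(\<mu> := a)) = enc Nt Ns c - c \<mu> * stride Nt Ns \<mu> + a * stride Nt Ns \<mu>"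
proof -
  assume "\<mu> < 4"
  hence "\<mu> = 0 \<or> \<mu> = 1 \<or> \<mu> = 2 \<or> \<mu> = 3" by auto
  thus ?thesis
    by (elim disjE) (simp_all add: enc_def stride_def eval_nat_numeral)
qed

lemma shift_enc: assumes "bnd Nt Ns c" "\<mu> < 4"
  shows "shift Nt Ns \<mu> d (enc Nt Ns c) = enc Nt Ns (c(\<mu> := newc Nt Ns \<mu> d (c \<mu>)))"
  by (simp only: shift_def coord_enc[OF assms] enc_upd[OF assms(2)] newc_def)

locale lat = fixes Nt Ns :: nat assumes Ntp: "Nt > 0" and Nsp: "Ns > 0"
begin

abbreviation "co x \<equiv> (\<lambda>\<nu>. coord Nt Ns \<nu> x)"

lemma x_enc: "x < nsites Nt Ns \<Longrightarrow> x = enc Nt Ns (co x)"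
  using enc_coord Ntp Nsp by simp

lemma shift_lt: assumes "x < nsites Nt Ns" "\<mu> < 4" shows "shift Nt Ns \<mu> d x < nsites Nt Ns"
proof -
  have "shift Nt Ns \<mu> d x = enc Nt Ns ((co x)(\<mu> := newc Nt Ns \<mu> d (co x \<mu>)))"
    using shift_enc[OF bnd_coord[OF Ntp Nsp] assms(2)] x_enc[OF assms(1)] by metis
  thus ?thesis using enc_lt bnd_upd[OF Ntp Nsp bnd_coord[OF Ntp Nsp]] by metis
qed

lemma newc_inv: "c < extent Nt Ns \<mu> \<Longrightarrow> newc Nt Ns \<mu> (-d) (newc Nt Ns \<mu> d c) = c"
proof -
  assume c: "c < extent Nt Ns \<mu>"
  have e: "extent Nt Ns \<mu> > 0" using Ntp Nsp by (simp add: extent_def)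
  have "int (newc Nt Ns \<mu> d c) = (int c + d) mod int (extent Nt Ns \<mu>)"
    unfolding newc_def using e by simp
  hence "(int (newc Nt Ns \<mu> d c) + - d) mod int (extent Nt Ns \<mu>) = int c mod int (extent Nt Ns \<mu>)"
    by (simp add: mod_simps)
  also have "\<dots> = int c" using c by simp
  finally show ?thesis unfolding newc_def[of _ _ _ "-d"] by simp
qed

lemma shift_inv: assumes "x < nsites Nt Ns" "\<mu> < 4" shows "shift Nt Ns \<mu> (-d) (shift Nt Ns \<mu> d x) = x"
proof -
  define c where "c = co x"
  have bc: "bnd Nt Ns c" unfolding c_def using bnd_coord[OF Ntp Nsp] .
  have x: "x = enc Nt Ns c" unfolding c_def using x_enc[OF assms(1)] .
  have b1: "bnd Nt Ns (c(\<mu> := newc Nt Ns \<mu> d (c \<mu>)))" using bnd_upd[OF Ntp Nsp bc] .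
  have cm: "c \<mu> < extent Nt Ns \<mu>" using bc assms(2) by (simp add: bnd_def)
  show ?thesis unfolding x shift_enc[OF bc assms(2)] shift_enc[OF b1 assms(2)]
    using newc_inv[OF cm] by simp
qed

lemma shift_comm: assumes "x < nsites Nt Ns" "\<mu> < 4" "\<nu> < 4" "\<mu> \<noteq> \<nu>"
  shows "shift Nt Ns \<mu> d (shift Nt Ns \<nu> e x) = shift Nt Ns \<nu> e (shift Nt Ns \<mu> d x)"
proof -
  define c where "c = co x"
  have bc: "bnd Nt Ns c" unfolding c_def using bnd_coord[OF Ntp Nsp] .
  have x: "x = enc Nt Ns c" unfolding c_def using x_enc[OF assms(1)] .
  have b1: "bnd Nt Ns (c(\<nu> := newc Nt Ns \<nu> e (c \<nu>)))" using bnd_upd[OF Ntp Nsp bc] .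
  have b2: "bnd Nt Ns (c(\<mu> := newc Nt Ns \<mu> d (c \<mu>)))" using bnd_upd[OF Ntp Nsp bc] .
  show ?thesis unfolding x shift_enc[OF bc assms(2)] shift_enc[OF bc assms(3)]
     shift_enc[OF b1 assms(2)] shift_enc[OF b2 assms(3)]
    using assms(4) by (simp add: fun_upd_twist)
qed

end

lemma adj_dims[simp]: "dim_row (adj A) = dim_col A" "dim_col (adj A) = dim_row A"
  by (simp_all add: adj_def)

lemma adj_index[simp]: "i < dim_col A \<Longrightarrow> j < dim_row A \<Longrightarrow> adj A $$ (i,j) = cnj (A $$ (j,i))"
  by (simp add: adj_def)

lemma adj_carrier: "A \<in> carrier_mat m n \<Longrightarrow> adj A \<in> carrier_mat n m"
  unfolding carrier_mat_def by simp

lemma adj_adj[simp]: "adj (adj A) = A"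
proof (rule eq_matI)
  fix i j assume "i < dim_row A" "j < dim_col A"
  thus "adj (adj A) $$ (i, j) = A $$ (i, j)" by simp
qed simp_all

lemma adj_mult: assumes "A \<in> carrier_mat m n" "B \<in> carrier_mat n p" shows "adj (A * B) = adj B * adj A"
proof (rule eq_matI)
  fix i j assume ij: "i < dim_row (adj B * adj A)" "j < dim_col (adj B * adj A)"
  hence ij': "i < p" "j < m" using assms by auto
  show "adj (A * B) $$ (i, j) = (adj B * adj A) $$ (i, j)"
    using assms ij' by (simp add: scalar_prod_def row_def col_def mult.commute)
qed (use assms in simp_all)

lemma adj_add: assumes "A \<in> carrier_mat m n" "B \<in> carrier_mat m n" shows "adj (A + B) = adj A + adj B"
proof (rule eq_matI)
  fix i j assume ij: "i < dim_row (adj A + adj B)" "j < dim_col (adj A + adj B)"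
  thus "adj (A + B) $$ (i, j) = (adj A + adj B) $$ (i, j)" using assms by simp
qed (use assms in simp_all)

lemma adj_minus: assumes "A \<in> carrier_mat m n" "B \<in> carrier_mat m n" shows "adj (A - B) = adj A - adj B"
proof (rule eq_matI)
  fix i j assume ij: "i < dim_row (adj A - adj B)" "j < dim_col (adj A - adj B)"
  thus "adj (A - B) $$ (i, j) = (adj A - adj B) $$ (i, j)" using assms by simp
qed (use assms in simp_all)

lemma smult_smult_mat: "a \<cdot>\<^sub>m (b \<cdot>\<^sub>m A) = (a * b :: 'a :: comm_ring_1) \<cdot>\<^sub>m A"
proof (rule eq_matI)
  fix i j assume "i < dim_row ((a * b) \<cdot>\<^sub>m A)" "j < dim_col ((a * b) \<cdot>\<^sub>m A)"
  thus "(a \<cdot>\<^sub>m (b \<cdot>\<^sub>m A)) $$ (i, j) = ((a * b) \<cdot>\<^sub>m A) $$ (i, j)" by (simp add: mult.assoc)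
qed simp_all

lemma one_smult_mat: "(1 :: 'a :: comm_ring_1) \<cdot>\<^sub>m A = A"
proof (rule eq_matI)
  fix i j assume "i < dim_row A" "j < dim_col A"
  thus "(1 \<cdot>\<^sub>m A) $$ (i, j) = A $$ (i, j)" by simp
qed simp_all

lemma sign_comm:
  assumes A: "A \<in> carrier_mat n n" and B: "B \<in> carrier_mat n n" and C: "C \<in> carrier_mat n n"
    and AB: "A * B = k \<cdot>\<^sub>m (B * A)" and AC: "A * C = l \<cdot>\<^sub>m (C * A)"
  shows "A * (B * C) = (k * l :: 'a :: comm_ring_1) \<cdot>\<^sub>m ((B * C) * A)"
proof -
  have "A * (B * C) = (A * B) * C" using A B C by simp
  also have "\<dots> = k \<cdot>\<^sub>m ((B * A) * C)" unfolding AB using mult_smult_assoc_mat[OF mult_carrier_mat[OF B A] C] .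
  also have "(B * A) * C = B * (A * C)" using A B C by simp
  also have "\<dots> = l \<cdot>\<^sub>m (B * (C * A))" unfolding AC using mult_smult_distrib[OF B mult_carrier_mat[OF C A]] .
  also have "B * (C * A) = (B * C) * A" using A B C by simp
  finally show ?thesis by (simp add: smult_smult_mat)
qed

definition sg :: "nat \<Rightarrow> complex" where "sg a = (if a < 2 then 1 else -1)"

lemma sg_sq[simp]: "sg a * sg a = 1" by (simp add: sg_def)

lemma sum_delta_r: "b < (n::nat) \<Longrightarrow> (\<Sum>i = 0..<n. f i * (if i = b then c i else 0)) = (f b * c b :: complex)"
proof -
  assume "b < n"
  have e: "(\<lambda>i. f i * (if i = b then c i else 0)) = (\<lambda>i. if i = b then f b * c b else 0)" by auto
  show ?thesis using \<open>b < n\<close> by (subst e) (simp add: sum.delta)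
qed

lemma sum_delta_l: "b < (n::nat) \<Longrightarrow> (\<Sum>i = 0..<n. (if b = i then c i else 0) * f i) = (c b * f b :: complex)"
proof -
  assume "b < n"
  have e: "(\<lambda>i. (if b = i then c i else 0) * f i) = (\<lambda>i. if i = b then c b * f b else 0)" by auto
  show ?thesis using \<open>b < n\<close> by (subst e) (simp add: sum.delta)
qed

context fixes \<gamma> :: "nat \<Rightarrow> complex mat" assumes gm: "gamma_matrices \<gamma>"
begin

lemma g_carrier: "\<mu> < 4 \<Longrightarrow> \<gamma> \<mu> \<in> carrier_mat 4 4"
  using gm by (simp add: gamma_matrices_def)

lemma g_herm: assumes "\<mu> < 4" "a < 4" "b < 4" shows "cnj (\<gamma> \<mu> $$ (b,a)) = \<gamma> \<mu> $$ (a,b)"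
proof -
  have "adj (\<gamma> \<mu>) = \<gamma> \<mu>" using gm assms by (simp add: gamma_matrices_def)
  hence "adj (\<gamma> \<mu>) $$ (a,b) = \<gamma> \<mu> $$ (a,b)" by simp
  thus ?thesis using g_carrier[OF assms(1)] assms by simp
qed

lemma g_rel: assumes "\<mu> < 4" "\<nu> < 4"
  shows "\<gamma> \<mu> * \<gamma> \<nu> = (if \<mu> = \<nu> then 1 else -1) \<cdot>\<^sub>m (\<gamma> \<nu> * \<gamma> \<mu>)"
proof (cases "\<mu> = \<nu>")
  case True thus ?thesis by (simp add: one_smult_mat)
next
  case False
  have cl: "\<gamma> \<mu> * \<gamma> \<nu> + \<gamma> \<nu> * \<gamma> \<mu> = 0\<^sub>m 4 4"
    using gm assms False by (simp add: gamma_matrices_def)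
  have c1: "\<gamma> \<mu> * \<gamma> \<nu> \<in> carrier_mat 4 4" "\<gamma> \<nu> * \<gamma> \<mu> \<in> carrier_mat 4 4"
    using g_carrier[OF assms(1)] g_carrier[OF assms(2)] by (metis mult_carrier_mat)+
  show ?thesis
  proof (rule eq_matI)
    fix i j assume ij: "i < dim_row ((if \<mu> = \<nu> then 1 else -1) \<cdot>\<^sub>m (\<gamma> \<nu> * \<gamma> \<mu>))"
       "j < dim_col ((if \<mu> = \<nu> then 1 else -1) \<cdot>\<^sub>m (\<gamma> \<nu> * \<gamma> \<mu>))"
    hence "i < 4" "j < 4" using c1 by auto
    hence "(\<gamma> \<mu> * \<gamma> \<nu> + \<gamma> \<nu> * \<gamma> \<mu>) $$ (i,j) = 0" using cl by simp
    thus "(\<gamma> \<mu> * \<gamma> \<nu>) $$ (i,j) = ((if \<mu> = \<nu> then 1 else -1) \<cdot>\<^sub>m (\<gamma> \<nu> * \<gamma> \<mu>)) $$ (i,j)"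
    proof -
      have d: "dim_row (\<gamma> \<nu> * \<gamma> \<mu>) = 4" "dim_col (\<gamma> \<nu> * \<gamma> \<mu>) = 4" using c1(2) by auto
      have "(\<gamma> \<mu> * \<gamma> \<nu>) $$ (i,j) + (\<gamma> \<nu> * \<gamma> \<mu>) $$ (i,j) = 0"
        using \<open>(\<gamma> \<mu> * \<gamma> \<nu> + \<gamma> \<nu> * \<gamma> \<mu>) $$ (i,j) = 0\<close> \<open>i<4\<close> \<open>j<4\<close> d
        by (subst (asm) index_add_mat(1)) auto
      thus ?thesis using \<open>i<4\<close> \<open>j<4\<close> d False by (simp add: eq_neg_iff_add_eq_0)
    qed
  qed (use c1 g_carrier[OF assms(1)] g_carrier[OF assms(2)] in simp_all)
qed

lemma g5_anti: assumes "\<mu> < 4"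
  shows "\<gamma> \<mu> * (\<gamma> 0 * \<gamma> 1 * \<gamma> 2 * \<gamma> 3) = (-1) \<cdot>\<^sub>m ((\<gamma> 0 * \<gamma> 1 * \<gamma> 2 * \<gamma> 3) * \<gamma> \<mu>)"
proof -
  have c: "\<gamma> 0 \<in> carrier_mat 4 4" "\<gamma> 1 \<in> carrier_mat 4 4" "\<gamma> 2 \<in> carrier_mat 4 4" "\<gamma> 3 \<in> carrier_mat 4 4"
      "\<gamma> \<mu> \<in> carrier_mat 4 4" using g_carrier assms by auto
  define k where "k = (\<lambda>\<nu>. if \<mu> = \<nu> then 1 else -1 :: complex)"
  have r: "\<gamma> \<mu> * \<gamma> \<nu> = k \<nu> \<cdot>\<^sub>m (\<gamma> \<nu> * \<gamma> \<mu>)" if "\<nu> < 4" for \<nu>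
    using g_rel[OF assms that] by (simp add: k_def)
  have r0: "\<gamma> \<mu> * \<gamma> 0 = k 0 \<cdot>\<^sub>m (\<gamma> 0 * \<gamma> \<mu>)" by (rule r) simp
  have r1: "\<gamma> \<mu> * \<gamma> 1 = k 1 \<cdot>\<^sub>m (\<gamma> 1 * \<gamma> \<mu>)" by (rule r) simp
  have r2: "\<gamma> \<mu> * \<gamma> 2 = k 2 \<cdot>\<^sub>m (\<gamma> 2 * \<gamma> \<mu>)" by (rule r) simp
  have r3: "\<gamma> \<mu> * \<gamma> 3 = k 3 \<cdot>\<^sub>m (\<gamma> 3 * \<gamma> \<mu>)" by (rule r) simp
  have c01: "\<gamma> 0 * \<gamma> 1 \<in> carrier_mat 4 4" using c by (metis mult_carrier_mat)
  have c012: "\<gamma> 0 * \<gamma> 1 * \<gamma> 2 \<in> carrier_mat 4 4" using c c01 by (metis mult_carrier_mat)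
  have s1: "\<gamma> \<mu> * (\<gamma> 0 * \<gamma> 1) = (k 0 * k 1) \<cdot>\<^sub>m ((\<gamma> 0 * \<gamma> 1) * \<gamma> \<mu>)"
    by (rule sign_comm[OF c(5) c(1) c(2) r0 r1])
  have s2: "\<gamma> \<mu> * (\<gamma> 0 * \<gamma> 1 * \<gamma> 2) = (k 0 * k 1 * k 2) \<cdot>\<^sub>m ((\<gamma> 0 * \<gamma> 1 * \<gamma> 2) * \<gamma> \<mu>)"
    by (rule sign_comm[OF c(5) c01 c(3) s1 r2])
  have s3: "\<gamma> \<mu> * (\<gamma> 0 * \<gamma> 1 * \<gamma> 2 * \<gamma> 3) = (k 0 * k 1 * k 2 * k 3) \<cdot>\<^sub>m ((\<gamma> 0 * \<gamma> 1 * \<gamma> 2 * \<gamma> 3) * \<gamma> \<mu>)"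
    by (rule sign_comm[OF c(5) c012 c(4) s2 r3])
  have "\<mu> = 0 \<or> \<mu> = 1 \<or> \<mu> = 2 \<or> \<mu> = 3" using assms by auto
  hence "k 0 * k 1 * k 2 * k 3 = -1" unfolding k_def by (elim disjE) simp_all
  thus ?thesis using s3 by simp
qed

lemma g_anti_entry: assumes "\<mu> < 4" "a < 4" "b < 4"
  shows "sg a * sg b * \<gamma> \<mu> $$ (a,b) = - \<gamma> \<mu> $$ (a,b)"
proof -
  have g5: "\<gamma> 0 * \<gamma> 1 * \<gamma> 2 * \<gamma> 3 = gamma5_diag" using gm by (simp add: gamma_matrices_def)
  have c: "\<gamma> \<mu> \<in> carrier_mat 4 4" using g_carrier assms by auto
  have e: "(\<gamma> \<mu> * gamma5_diag) $$ (a,b) = ((-1) \<cdot>\<^sub>m (gamma5_diag * \<gamma> \<mu>)) $$ (a,b)"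
    using g5_anti[OF assms(1)] g5 by simp
  have l: "(\<gamma> \<mu> * gamma5_diag) $$ (a,b) = \<gamma> \<mu> $$ (a,b) * sg b"
    using c assms unfolding gamma5_diag_def
    by (simp add: scalar_prod_def row_def col_def sum_delta_r sg_def)
  have r: "(gamma5_diag * \<gamma> \<mu>) $$ (a,b) = sg a * \<gamma> \<mu> $$ (a,b)"
    using c assms unfolding gamma5_diag_def
    by (simp add: scalar_prod_def row_def col_def sum_delta_l sg_def)
  have "\<gamma> \<mu> $$ (a,b) * sg b = - (sg a * \<gamma> \<mu> $$ (a,b))"
    using e l r c assms by (simp add: gamma5_diag_def)
  thus ?thesis by (cases "a < 2"; cases "b < 2") (simp_all add: sg_def)
qed

end

lemma adj4: assumes "A \<in> carrier_mat 3 3" "B \<in> carrier_mat 3 3" "C \<in> carrier_mat 3 3" "D \<in> carrier_mat 3 3"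
  shows "adj (A * B * C * D) = adj D * adj C * adj B * adj A"
proof -
  have ab: "A * B \<in> carrier_mat 3 3" using assms by (intro mult_carrier_mat)
  have abc: "A * B * C \<in> carrier_mat 3 3" using assms ab by (intro mult_carrier_mat)
  have "adj (A * B * C * D) = adj D * adj (A * B * C)" by (rule adj_mult[OF abc assms(4)])
  also have "adj (A * B * C) = adj C * adj (A * B)" by (rule adj_mult[OF ab assms(3)])
  also have "adj (A * B) = adj B * adj A" by (rule adj_mult[OF assms(1,2)])
  finally have e: "adj (A * B * C * D) = adj D * (adj C * (adj B * adj A))" .
  note c = adj_carrier[OF assms(1)] adj_carrier[OF assms(2)] adj_carrier[OF assms(3)] adj_carrier[OF assms(4)]
  have 1: "adj D * adj C * (adj B * adj A) = adj D * (adj C * (adj B * adj A))"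
    by (rule assoc_mult_mat[OF c(4) c(3) mult_carrier_mat[OF c(2) c(1)]])
  have 2: "adj D * adj C * adj B * adj A = adj D * adj C * (adj B * adj A)"
    by (rule assoc_mult_mat[OF mult_carrier_mat[OF c(4) c(3)] c(2) c(1)])
  show ?thesis unfolding e 2 1 ..
qed

lemma carrier4: assumes "A \<in> carrier_mat 3 3" "B \<in> carrier_mat 3 3" "C \<in> carrier_mat 3 3" "D \<in> carrier_mat 3 3"
  shows "A * B * C * D \<in> carrier_mat 3 3"
  using assms by (intro mult_carrier_mat)

locale setting = lat Nt Ns for Nt Ns +
  fixes U :: "nat \<Rightarrow> nat \<Rightarrow> complex mat"
  assumes su: "\<forall>x < nsites Nt Ns. \<forall>\<mu> < 4. SU3 (U x \<mu>)"
begin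

abbreviation "fw \<mu> x \<equiv> shift Nt Ns \<mu> 1 x"
abbreviation "bw \<mu> x \<equiv> shift Nt Ns \<mu> (-1) x"

lemma Uc: "x < nsites Nt Ns \<Longrightarrow> \<mu> < 4 \<Longrightarrow> U x \<mu> \<in> carrier_mat 3 3"
  using su by (simp add: SU3_def)

lemma Uac: "x < nsites Nt Ns \<Longrightarrow> \<mu> < 4 \<Longrightarrow> adj (U x \<mu>) \<in> carrier_mat 3 3"
  using Uc adj_carrier by blast

lemma bw_fw: "x < nsites Nt Ns \<Longrightarrow> \<mu> < 4 \<Longrightarrow> bw \<mu> (fw \<mu> x) = x"
  using shift_inv[of x \<mu> 1] by simp

lemma fw_bw: "x < nsites Nt Ns \<Longrightarrow> \<mu> < 4 \<Longrightarrow> fw \<mu> (bw \<mu> x) = x"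
  using shift_inv[of x \<mu> "-1"] by simp

lemma fw_iff: "x < nsites Nt Ns \<Longrightarrow> y < nsites Nt Ns \<Longrightarrow> \<mu> < 4 \<Longrightarrow> (y = fw \<mu> x) = (x = bw \<mu> y)"
  using bw_fw fw_bw by metis

lemma Q_carrier: assumes "x < nsites Nt Ns" "\<mu> < 4" "\<nu> < 4"
  shows "Qpl Nt Ns U \<mu> \<nu> x \<in> carrier_mat 3 3"
proof -
  note sl = shift_lt[OF _ assms(2)] shift_lt[OF _ assms(3)]
  have x: "x < nsites Nt Ns" by fact
  show ?thesis unfolding Qpl_def Let_def
    apply (intro add_carrier_mat carrier4)
    by (intro Uc Uac sl x assms(2,3))+
qed

lemma Q_adj: assumes x: "x < nsites Nt Ns" and m: "\<mu> < 4" and n: "\<nu> < 4"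
  shows "adj (Qpl Nt Ns U \<mu> \<nu> x) = Qpl Nt Ns U \<nu> \<mu> x"
proof -
  note sl = shift_lt[OF _ m] shift_lt[OF _ n]
  define A1 where "A1 = U x \<mu> * U (fw \<mu> x) \<nu> * adj (U (fw \<nu> x) \<mu>) * adj (U x \<nu>)"
  define A2 where "A2 = U x \<nu> * adj (U (bw \<mu> (fw \<nu> x)) \<mu>) * adj (U (bw \<mu> x) \<nu>) * U (bw \<mu> x) \<mu>"
  define A3 where "A3 = adj (U (bw \<mu> x) \<mu>) * adj (U (bw \<nu> (bw \<mu> x)) \<nu>) * U (bw \<nu> (bw \<mu> x)) \<mu> * U (bw \<nu> x) \<nu>"
  define A4 where "A4 = adj (U (bw \<nu> x) \<nu>) * U (bw \<nu> x) \<mu> * U (fw \<mu> (bw \<nu> x)) \<nu> * adj (U x \<mu>)"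
  define B1 where "B1 = U x \<nu> * U (fw \<nu> x) \<mu> * adj (U (fw \<mu> x) \<nu>) * adj (U x \<mu>)"
  define B2 where "B2 = U x \<mu> * adj (U (bw \<nu> (fw \<mu> x)) \<nu>) * adj (U (bw \<nu> x) \<mu>) * U (bw \<nu> x) \<nu>"
  define B3 where "B3 = adj (U (bw \<nu> x) \<nu>) * adj (U (bw \<mu> (bw \<nu> x)) \<mu>) * U (bw \<mu> (bw \<nu> x)) \<nu> * U (bw \<mu> x) \<mu>"
  define B4 where "B4 = adj (U (bw \<mu> x) \<mu>) * U (bw \<mu> x) \<nu> * U (fw \<nu> (bw \<mu> x)) \<mu> * adj (U x \<nu>)"
  have qa: "Qpl Nt Ns U \<mu> \<nu> x = A1 + A2 + A3 + A4"
    unfolding Qpl_def Let_def A1_def A2_def A3_def A4_def ..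
  have qb: "Qpl Nt Ns U \<nu> \<mu> x = B1 + B2 + B3 + B4"
    unfolding Qpl_def Let_def B1_def B2_def B3_def B4_def ..
  have cA: "A1 \<in> carrier_mat 3 3" "A2 \<in> carrier_mat 3 3" "A3 \<in> carrier_mat 3 3" "A4 \<in> carrier_mat 3 3"
    unfolding A1_def A2_def A3_def A4_def
    by (intro carrier4; intro Uc Uac sl x m n)+
  have cB: "B1 \<in> carrier_mat 3 3" "B2 \<in> carrier_mat 3 3" "B3 \<in> carrier_mat 3 3" "B4 \<in> carrier_mat 3 3"
    unfolding B1_def B2_def B3_def B4_def
    by (intro carrier4; intro Uc Uac sl x m n)+
  have com1: "bw \<mu> (fw \<nu> x) = fw \<nu> (bw \<mu> x)"
    using shift_comm[OF x m n] by (cases "\<mu> = \<nu>") (simp_all add: bw_fw fw_bw x m n)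
  have com2: "bw \<nu> (fw \<mu> x) = fw \<mu> (bw \<nu> x)"
    using shift_comm[OF x n m] by (cases "\<mu> = \<nu>") (simp_all add: bw_fw fw_bw x m n)
  have com3: "bw \<nu> (bw \<mu> x) = bw \<mu> (bw \<nu> x)"
    using shift_comm[OF x n m] by (cases "\<mu> = \<nu>") simp_all
  have e1: "adj A1 = B1" unfolding A1_def B1_def
    by (subst adj4; (intro Uc Uac sl x m n)?) simp
  have e2: "adj A2 = B4" unfolding A2_def B4_def com1
    by (subst adj4; (intro Uc Uac sl x m n)?) simp
  have e3: "adj A3 = B3" unfolding A3_def B3_def com3
    by (subst adj4; (intro Uc Uac sl x m n)?) simp
  have e4: "adj A4 = B2" unfolding A4_def B2_def com2
    by (subst adj4; (intro Uc Uac sl x m n)?) simp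
  have "adj (A1 + A2 + A3 + A4) = adj A1 + adj A2 + adj A3 + adj A4"
    using cA by (metis adj_add add_carrier_mat)
  also have "\<dots> = B1 + B4 + B3 + B2" unfolding e1 e2 e3 e4 ..
  also have "\<dots> = B1 + B2 + B3 + B4"
  proof (rule eq_matI)
    fix i j assume ij: "i < dim_row (B1 + B2 + B3 + B4)" "j < dim_col (B1 + B2 + B3 + B4)"
    hence "i < 3" "j < 3" using cB by auto
    thus "(B1 + B4 + B3 + B2) $$ (i, j) = (B1 + B2 + B3 + B4) $$ (i, j)"
      using cB by (simp add: ac_simps)
  qed (use cB in simp_all)
  finally show ?thesis using qa qb by simp
qed

end

lemma sg_real: "cnj (sg a) = sg a" by (simp add: sg_def)

lemma swap_aux: "(s::complex) * s = 1 \<Longrightarrow> a * b * (p * q) = (a * s * q) * (s * b * p)"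
proof -
  assume h: "s * s = 1"
  have "(a * s * q) * (s * b * p) = a * b * (p * q) * (s * s)" by (simp add: algebra_simps)
  thus ?thesis using h by simp
qed

locale full = setting Nt Ns U for Nt Ns U +
  fixes \<gamma> :: "nat \<Rightarrow> complex mat" and a m0 csw :: real
  assumes gm: "gamma_matrices \<gamma>"
begin

lemma gc: "\<mu> < 4 \<Longrightarrow> \<gamma> \<mu> \<in> carrier_mat 4 4" using g_carrier[OF gm] .

lemma gg: assumes "si < 4" "sj < 4" "\<mu> < 4" "\<nu> < 4"
  shows "sg si * sg sj * cnj ((\<gamma> \<mu> * \<gamma> \<nu>) $$ (sj, si)) = (\<gamma> \<nu> * \<gamma> \<mu>) $$ (si, sj)"
proof -
  have c: "\<gamma> \<mu> \<in> carrier_mat 4 4" "\<gamma> \<nu> \<in> carrier_mat 4 4" using gc assms by auto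
  have L: "(\<gamma> \<mu> * \<gamma> \<nu>) $$ (sj, si) = (\<Sum>k = 0..<4. \<gamma> \<mu> $$ (sj, k) * \<gamma> \<nu> $$ (k, si))"
    using c assms by (simp add: scalar_prod_def row_def col_def)
  have R: "(\<gamma> \<nu> * \<gamma> \<mu>) $$ (si, sj) = (\<Sum>k = 0..<4. \<gamma> \<nu> $$ (si, k) * \<gamma> \<mu> $$ (k, sj))"
    using c assms by (simp add: scalar_prod_def row_def col_def)
  have "sg si * sg sj * cnj ((\<gamma> \<mu> * \<gamma> \<nu>) $$ (sj, si))
      = (\<Sum>k = 0..<4. sg si * sg sj * (cnj (\<gamma> \<mu> $$ (sj, k)) * cnj (\<gamma> \<nu> $$ (k, si))))"
    unfolding L by (simp add: sum_distrib_left)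
  also have "\<dots> = (\<Sum>k = 0..<4. \<gamma> \<nu> $$ (si, k) * \<gamma> \<mu> $$ (k, sj))"
  proof (rule sum.cong)
    fix k assume "k \<in> {0..<4::nat}"
    hence k: "k < 4" by simp
    have h1: "sg si * sg k * \<gamma> \<nu> $$ (si, k) = - \<gamma> \<nu> $$ (si, k)"
      using g_anti_entry[OF gm assms(4) assms(1) k] .
    have h2: "sg k * sg sj * \<gamma> \<mu> $$ (k, sj) = - \<gamma> \<mu> $$ (k, sj)"
      using g_anti_entry[OF gm assms(3) k assms(2)] .
    have "sg si * sg sj * (cnj (\<gamma> \<mu> $$ (sj, k)) * cnj (\<gamma> \<nu> $$ (k, si)))
       = sg si * sg sj * (\<gamma> \<mu> $$ (k, sj) * \<gamma> \<nu> $$ (si, k))"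
      using g_herm[OF gm assms(3) k assms(2)] g_herm[OF gm assms(4) assms(1) k] by simp
    also have "\<dots> = (sg si * sg k * \<gamma> \<nu> $$ (si, k)) * (sg k * sg sj * \<gamma> \<mu> $$ (k, sj))"
      by (rule swap_aux) simp
    also have "\<dots> = \<gamma> \<nu> $$ (si, k) * \<gamma> \<mu> $$ (k, sj)" unfolding h1 h2 by simp
    finally show "sg si * sg sj * (cnj (\<gamma> \<mu> $$ (sj, k)) * cnj (\<gamma> \<nu> $$ (k, si)))
       = \<gamma> \<nu> $$ (si, k) * \<gamma> \<mu> $$ (k, sj)" .
  qed simp
  finally show ?thesis unfolding R .
qed

definition Fm where "Fm \<mu> \<nu> x = Qpl Nt Ns U \<mu> \<nu> x - Qpl Nt Ns U \<nu> \<mu> x"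

lemma Fm_entry: assumes "x < nsites Nt Ns" "\<mu> < 4" "\<nu> < 4" "ci < 3" "cj < 3"
  shows "cnj ((Fm \<mu> \<nu> x) $$ (cj, ci)) = (Fm \<nu> \<mu> x) $$ (ci, cj)"
proof -
  have c1: "Qpl Nt Ns U \<mu> \<nu> x \<in> carrier_mat 3 3" "Qpl Nt Ns U \<nu> \<mu> x \<in> carrier_mat 3 3"
    using Q_carrier assms by auto
  have "adj (Fm \<mu> \<nu> x) = Fm \<nu> \<mu> x"
    unfolding Fm_def adj_minus[OF c1] Q_adj[OF assms(1-3)] Q_adj[OF assms(1,3,2)] ..
  hence "adj (Fm \<mu> \<nu> x) $$ (ci, cj) = Fm \<nu> \<mu> x $$ (ci, cj)" by simp
  moreover have "Fm \<mu> \<nu> x \<in> carrier_mat 3 3" unfolding Fm_def using c1 by (intro minus_carrier_mat)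
  ultimately show ?thesis using assms by simp
qed

definition Cl where "Cl x y si sj ci cj =
      (if x = y then
          (if si = sj \<and> ci = cj then complex_of_real ((m0 + 4) / a) else 0)
          - complex_of_real (csw / (32 * a)) *
              (\<Sum>\<mu><4. \<Sum>\<nu><4. (\<gamma> \<mu> * \<gamma> \<nu>) $$ (si, sj) *
                  (Qpl Nt Ns U \<mu> \<nu> x - Qpl Nt Ns U \<nu> \<mu> x) $$ (ci, cj))
       else 0)"

definition H1 where "H1 x y si sj ci cj = complex_of_real (1 / (2 * a)) *
          (\<Sum>\<mu><4. if y = shift Nt Ns \<mu> 1 x
                   then (1\<^sub>m 4 - \<gamma> \<mu>) $$ (si, sj) * U x \<mu> $$ (ci, cj) else 0)"

definition H2 where "H2 x y si sj ci cj = complex_of_real (1 / (2 * a)) *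
          (\<Sum>\<mu><4. if y = shift Nt Ns \<mu> (-1) x
                   then (1\<^sub>m 4 + \<gamma> \<mu>) $$ (si, sj) * adj (U (shift Nt Ns \<mu> (-1) x) \<mu>) $$ (ci, cj)
                   else 0)"

lemma D_entry: assumes "i < 12 * nsites Nt Ns" "j < 12 * nsites Nt Ns"
  shows "dirac Nt Ns a m0 csw \<gamma> U $$ (i, j) =
     Cl (site_of i) (site_of j) (spin_of i) (spin_of j) (color_of i) (color_of j)
   - H1 (site_of i) (site_of j) (spin_of i) (spin_of j) (color_of i) (color_of j)
   - H2 (site_of i) (site_of j) (spin_of i) (spin_of j) (color_of i) (color_of j)"
  using assms unfolding dirac_def Cl_def H1_def H2_def Let_def by simp


lemma one_pm_entry: assumes "\<mu> < 4" "p < 4" "q < 4"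
  shows "(1\<^sub>m 4 + \<gamma> \<mu>) $$ (p, q) = (if p = q then 1 else 0) + \<gamma> \<mu> $$ (p, q)"
    "(1\<^sub>m 4 - \<gamma> \<mu>) $$ (p, q) = (if p = q then 1 else 0) - \<gamma> \<mu> $$ (p, q)"
  using gc[OF assms(1)] assms by auto

lemma H1_sym: assumes x: "x < nsites Nt Ns" and y: "y < nsites Nt Ns" and "si < 4" "sj < 4" "ci < 3" "cj < 3"
  shows "H1 x y si sj ci cj = sg si * sg sj * cnj (H2 y x sj si cj ci)"
proof -
  have "sg si * sg sj * cnj (H2 y x sj si cj ci) = complex_of_real (1 / (2 * a)) *
     (\<Sum>\<mu><4. sg si * sg sj * cnj (if x = bw \<mu> y
                   then (1\<^sub>m 4 + \<gamma> \<mu>) $$ (sj, si) * adj (U (bw \<mu> y) \<mu>) $$ (cj, ci)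
                   else 0))"
    unfolding H2_def by (simp add: sum_distrib_left algebra_simps)
  also have "\<dots> = complex_of_real (1 / (2 * a)) *
          (\<Sum>\<mu><4. if y = fw \<mu> x
                   then (1\<^sub>m 4 - \<gamma> \<mu>) $$ (si, sj) * U x \<mu> $$ (ci, cj) else 0)"
  proof (rule arg_cong[where f = "\<lambda>t. _ * t"], rule sum.cong[OF refl])
    fix \<mu> assume "\<mu> \<in> {..<4::nat}"
    hence m: "\<mu> < 4" by simp
    show "sg si * sg sj * cnj (if x = bw \<mu> y
                   then (1\<^sub>m 4 + \<gamma> \<mu>) $$ (sj, si) * adj (U (bw \<mu> y) \<mu>) $$ (cj, ci)
                   else 0) = (if y = fw \<mu> x
                   then (1\<^sub>m 4 - \<gamma> \<mu>) $$ (si, sj) * U x \<mu> $$ (ci, cj) else 0)"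
    proof (cases "y = fw \<mu> x")
      case True
      hence b: "x = bw \<mu> y" using fw_iff[OF x y m] by simp
      have u: "cnj (adj (U x \<mu>) $$ (cj, ci)) = U x \<mu> $$ (ci, cj)"
        using Uc[OF x m] assms by simp
      have g: "sg si * sg sj * cnj ((if sj = si then 1 else 0) + \<gamma> \<mu> $$ (sj, si))
           = (if si = sj then 1 else 0) - \<gamma> \<mu> $$ (si, sj)"
        using g_herm[OF gm m assms(3,4)] g_anti_entry[OF gm m assms(3,4)]
        by (auto simp: algebra_simps)
      show ?thesis using True b[symmetric] u g
        unfolding one_pm_entry[OF m assms(4,3)] one_pm_entry[OF m assms(3,4)]
        by (simp add: mult.assoc[symmetric])
    next
      case False
      hence "x \<noteq> bw \<mu> y" using fw_iff[OF x y m] by simp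
      thus ?thesis using False by simp
    qed
  qed
  also have "\<dots> = H1 x y si sj ci cj" unfolding H1_def ..
  finally show ?thesis ..
qed

lemma H2_sym: assumes x: "x < nsites Nt Ns" and y: "y < nsites Nt Ns" and "si < 4" "sj < 4" "ci < 3" "cj < 3"
  shows "H2 x y si sj ci cj = sg si * sg sj * cnj (H1 y x sj si cj ci)"
proof -
  have "H1 y x sj si cj ci = sg sj * sg si * cnj (H2 x y si sj ci cj)"
    using H1_sym[OF y x assms(4,3,6,5)] .
  hence "sg si * sg sj * cnj (H1 y x sj si cj ci) = (sg si * sg si) * (sg sj * sg sj) * H2 x y si sj ci cj"
    by (simp add: sg_real algebra_simps)
  thus ?thesis by simp
qed

lemma Cl_sym: assumes x: "x < nsites Nt Ns" and y: "y < nsites Nt Ns" and "si < 4" "sj < 4" "ci < 3" "cj < 3"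
  shows "Cl x y si sj ci cj = sg si * sg sj * cnj (Cl y x sj si cj ci)"
proof (cases "x = y")
  case False thus ?thesis by (simp add: Cl_def)
next
  case True
  define S where "S = (\<lambda>si sj ci cj. \<Sum>\<mu><4. \<Sum>\<nu><4. (\<gamma> \<mu> * \<gamma> \<nu>) $$ (si, sj) * Fm \<mu> \<nu> x $$ (ci, cj))"
  have Cx: "Cl x x p q r t = (if p = q \<and> r = t then complex_of_real ((m0 + 4) / a) else 0)
          - complex_of_real (csw / (32 * a)) * S p q r t" for p q r t
    unfolding Cl_def S_def Fm_def by simp
  have M: "sg si * sg sj * cnj (if sj = si \<and> cj = ci then complex_of_real ((m0 + 4) / a) else 0)
      = (if si = sj \<and> ci = cj then complex_of_real ((m0 + 4) / a) else 0)"
    by auto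
  have "sg si * sg sj * cnj (S sj si cj ci) =
      (\<Sum>\<mu><4. \<Sum>\<nu><4. (sg si * sg sj * cnj ((\<gamma> \<mu> * \<gamma> \<nu>)  $$ (sj, si))) * cnj (Fm \<mu> \<nu> x $$ (cj, ci)))"
    unfolding S_def by (simp add: sum_distrib_left algebra_simps)
  also have "\<dots> = (\<Sum>\<mu><4. \<Sum>\<nu><4. (\<gamma> \<nu> * \<gamma> \<mu>) $$ (si, sj) * Fm \<nu> \<mu> x $$ (ci, cj))"
    using gg[OF assms(3,4)] Fm_entry[OF x _ _ assms(5,6)] by simp
  also have "\<dots> = S si sj ci cj" unfolding S_def by (rule sum.swap)
  finally have SS: "sg si * sg sj * cnj (S sj si cj ci) = S si sj ci cj" .
  have "sg si * sg sj * cnj (Cl y x sj si cj ci) =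
     sg si * sg sj * cnj (if sj = si \<and> cj = ci then complex_of_real ((m0 + 4) / a) else 0)
     - complex_of_real (csw / (32 * a)) * (sg si * sg sj * cnj (S sj si cj ci))"
    unfolding True[symmetric] Cx by (simp add: algebra_simps)
  also have "\<dots> = Cl x y si sj ci cj" unfolding M SS by (simp add: True[symmetric] Cx)
  finally show ?thesis ..
qed

lemma K_sym: assumes x: "x < nsites Nt Ns" and y: "y < nsites Nt Ns" and "si < 4" "sj < 4" "ci < 3" "cj < 3"
  shows "Cl x y si sj ci cj - H1 x y si sj ci cj - H2 x y si sj ci cj
     = sg si * sg sj * cnj (Cl y x sj si cj ci - H1 y x sj si cj ci - H2 y x sj si cj ci)"
  using Cl_sym[OF assms] H1_sym[OF assms] H2_sym[OF assms] by (simp add: algebra_simps)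

end

lemma idx_eq: assumes "site_of i = site_of j" "spin_of i = spin_of j" "color_of i = color_of j"
  shows "i = j"
proof -
  have d: "k = 12 * site_of k + 3 * spin_of k + color_of k" for k :: nat
  proof -
    have "k mod 12 mod 3 = k mod 3" by (simp add: mod_mod_cancel)
    hence "k mod 12 = 3 * ((k mod 12) div 3) + k mod 3" by (metis div_mult_mod_eq mult.commute)
    moreover have "k = 12 * (k div 12) + k mod 12" by simp
    ultimately show ?thesis unfolding site_of_def spin_of_def color_of_def by linarith
  qed
  show ?thesis using d[of i] d[of j] assms by metis
qed

lemma spin_lt: "spin_of k < 4" unfolding spin_of_def by auto
lemma color_lt: "color_of k < 3" unfolding color_of_def by auto
lemma site_lt: "k < 12 * m \<Longrightarrow> site_of k < m" unfolding site_of_def by auto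

definition G5m :: "nat \<Rightarrow> complex mat" where
  "G5m n = mat n n (\<lambda>(i,j). if i = j then sg (spin_of i) else 0)"

lemma G5m_carrier: "G5m n \<in> carrier_mat n n" by (simp add: G5m_def)

lemma Gamma5_eq: assumes "gamma_matrices \<gamma>" shows "Gamma5 nL \<gamma> = G5m (12 * nL)"
proof (rule eq_matI)
  fix i j assume ij: "i < dim_row (G5m (12 * nL))" "j < dim_col (G5m (12 * nL))"
  have g5: "\<gamma> 0 * \<gamma> 1 * \<gamma> 2 * \<gamma> 3 = gamma5_diag" using assms by (simp add: gamma_matrices_def)
  have "(if site_of i = site_of j \<and> color_of i = color_of j
     then gamma5_diag $$ (spin_of i, spin_of j) else 0) = (if i = j then sg (spin_of i) else 0)"
    using idx_eq[of i j] spin_lt[of i] spin_lt[of j] unfolding gamma5_diag_def sg_def by auto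
  thus "Gamma5 nL \<gamma> $$ (i, j) = G5m (12 * nL) $$ (i, j)"
    using ij unfolding Gamma5_def g5 by (simp add: G5m_def)
qed (simp_all add: Gamma5_def G5m_def)

lemma G5m_mult_entry: assumes "B \<in> carrier_mat n m" "i < n" "j < m"
  shows "(G5m n * B) $$ (i, j) = sg (spin_of i) * B $$ (i, j)"
proof -
  have "(G5m n * B) $$ (i, j) = (\<Sum>ia = 0..<n. (if i = ia then sg (spin_of i) else 0) * B $$ (ia, j))"
    using assms by (simp add: G5m_def scalar_prod_def row_def col_def)
  also have "\<dots> = sg (spin_of i) * B $$ (i, j)"
    using sum_delta_l[of i n "\<lambda>_. sg (spin_of i)" "\<lambda>ia. B $$ (ia, j)"] assms(2) by simp
  finally show ?thesis .
qed

lemma G5m_adj: "adj (G5m n) = G5m n"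
proof (rule eq_matI)
  fix i j assume "i < dim_row (G5m n)" "j < dim_col (G5m n)"
  thus "adj (G5m n) $$ (i, j) = G5m n $$ (i, j)" by (simp add: G5m_def sg_real)
qed (simp_all add: G5m_def)

context full begin

lemma D_carrier: "dirac Nt Ns a m0 csw \<gamma> U \<in> carrier_mat (12 * nsites Nt Ns) (12 * nsites Nt Ns)"
  by (simp add: dirac_def)

lemma D_sym: assumes "i < 12 * nsites Nt Ns" "j < 12 * nsites Nt Ns"
  shows "dirac Nt Ns a m0 csw \<gamma> U $$ (i, j) = sg (spin_of i) * sg (spin_of j) * cnj (dirac Nt Ns a m0 csw \<gamma> U $$ (j, i))"
  unfolding D_entry[OF assms] D_entry[OF assms(2,1)]
  by (rule K_sym[OF site_lt[OF assms(1)] site_lt[OF assms(2)] spin_lt spin_lt color_lt color_lt])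

lemma G5D_herm: "adj (G5m (12 * nsites Nt Ns) * dirac Nt Ns a m0 csw \<gamma> U) = G5m (12 * nsites Nt Ns) * dirac Nt Ns a m0 csw \<gamma> U"
proof (rule eq_matI)
  let ?n = "12 * nsites Nt Ns"
  let ?D = "dirac Nt Ns a m0 csw \<gamma> U"
  fix i j assume ij: "i < dim_row (G5m ?n * ?D)" "j < dim_col (G5m ?n * ?D)"
  hence i: "i < ?n" and j: "j < ?n" using D_carrier by (simp_all add: G5m_def)
  have dG: "dim_row (G5m ?n) = ?n" by (simp add: G5m_def)
  have dD: "dim_col ?D = ?n" using D_carrier by simp
  have "adj (G5m ?n * ?D) $$ (i, j) = cnj ((G5m ?n * ?D) $$ (j, i))" by (rule adj_index) (simp_all add: dG dD i j)
  also have "\<dots> = sg (spin_of j) * cnj (?D $$ (j, i))"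
    using G5m_mult_entry[OF D_carrier j i] by (simp add: sg_real)
  also have "\<dots> = sg (spin_of i) * ?D $$ (i, j)"
    unfolding D_sym[OF i j] by (simp add: algebra_simps)
  also have "\<dots> = (G5m ?n * ?D) $$ (i, j)" using G5m_mult_entry[OF D_carrier i j] ..
  finally show "adj (G5m ?n * ?D) $$ (i, j) = (G5m ?n * ?D) $$ (i, j)" .
qed (use D_carrier in \<open>simp_all add: G5m_def\<close>)

end

lemma cinner_adj: assumes A: "A \<in> carrier_mat m n" and u: "u \<in> carrier_vec n" and w: "w \<in> carrier_vec m"
  shows "cinner (A *\<^sub>v u) w = cinner u (adj A *\<^sub>v w)"
proof -
  have "cinner (A *\<^sub>v u) w = (\<Sum>k<m. \<Sum>j<n. cnj (A $$ (k, j)) * cnj (u $ j) * w $ k)"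
    using A u unfolding cinner_def
    by (simp add: scalar_prod_def row_def atLeast0LessThan sum_distrib_right)
  also have "\<dots> = (\<Sum>j<n. \<Sum>k<m. cnj (A $$ (k, j)) * cnj (u $ j) * w $ k)" by (rule sum.swap)
  also have "\<dots> = cinner u (adj A *\<^sub>v w)"
    using A u w unfolding cinner_def
    by (simp add: scalar_prod_def row_def atLeast0LessThan sum_distrib_left algebra_simps)
  finally show ?thesis .
qed

locale prol =
  fixes n s N :: nat and A :: "nat \<Rightarrow> nat set" and v :: "nat \<Rightarrow> complex vec" and P :: "complex mat"
  assumes agg: "is_aggregation n s A" and comp: "gamma5_compatible s A"
    and vc: "\<forall>l < N. v l \<in> carrier_vec n"
    and pr: "is_agg_prolongation n s A N v P"
begin

lemma Pc: "P \<in> carrier_mat n (s * N)" using pr by (simp add: is_agg_prolongation_def)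

lemma pdec: assumes "p < s * N" shows "p div N < s" "p mod N < N" "p = (p div N) * N + p mod N"
proof -
  have N: "N > 0" using assms by (cases N) auto
  show "p div N < s" using assms by (simp add: div_less_iff_less_mult N mult.commute)
  show "p mod N < N" using N by simp
  show "p = (p div N) * N + p mod N" by simp
qed

lemma P_supp: assumes p: "p < s * N" and k: "k < n" and nk: "k \<notin> A (p div N)"
  shows "P $$ (k, p) = 0"
proof -
  define i where "i = p div N"
  define l where "l = p mod N"
  have i: "i < s" and l: "l < N" and pe: "p = i * N + l" using pdec[OF p] by (auto simp: i_def l_def)
  have span: "cspan n N (\<lambda>l. col P (i * N + l)) = cspan n N (\<lambda>l. restr (A i) (v l))"
    using pr i by (simp add: is_agg_prolongation_def)
  have e: "col P p = vec n (\<lambda>k. \<Sum>l'<N. (if l' = l then 1 else 0) * col P (i * N + l') $ k)"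
  proof (rule eq_vecI)
    fix k assume "k < dim_vec (vec n (\<lambda>k. \<Sum>l'<N. (if l' = l then 1 else 0) * col P (i * N + l') $ k))"
    hence "k < n" by simp
    thus "col P p $ k = vec n (\<lambda>k. \<Sum>l'<N. (if l' = l then 1 else 0) * col P (i * N + l') $ k) $ k"
      using l pe by (simp add: sum.delta if_distrib[where f = "\<lambda>x. x * _"] cong: if_cong)
  qed (use Pc in simp)
  have "col P p \<in> cspan n N (\<lambda>l. col P (i * N + l))" unfolding cspan_def
    by (intro CollectI exI[where x="\<lambda>l'. if l' = l then 1 else 0"]) (simp only: e simp_thms)
  hence "col P p \<in> cspan n N (\<lambda>l. restr (A i) (v l))" using span by simp
  then obtain c where c: "col P p = vec n (\<lambda>k. \<Sum>l<N. c l * restr (A i) (v l) $ k)"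
    unfolding cspan_def by blast
  have "P $$ (k, p) = col P p $ k" using Pc p k by simp
  also have "\<dots> = (\<Sum>l<N. c l * restr (A i) (v l) $ k)" unfolding c using k by simp
  also have "\<dots> = 0"
  proof (rule sum.neutral, rule ballI)
    fix l assume "l \<in> {..<N}"
    hence "v l \<in> carrier_vec n" using vc by simp
    thus "c l * restr (A i) (v l) $ k = 0" using nk k unfolding i_def restr_def by simp
  qed
  finally show ?thesis .
qed

lemma PHP: "adj P * P = 1\<^sub>m (s * N)"
proof (rule eq_matI)
  fix p q assume pq: "p < dim_row (1\<^sub>m (s * N))" "q < dim_col (1\<^sub>m (s * N))"
  hence p: "p < s * N" and q: "q < s * N" by auto
  have "(adj P * P) $$ (p, q) = (\<Sum>k<n. cnj (P $$ (k, p)) * P $$ (k, q))"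
    using Pc p q by (simp add: scalar_prod_def row_def col_def atLeast0LessThan)
  also have "\<dots> = 1\<^sub>m (s * N) $$ (p, q)"
  proof (cases "p div N = q div N")
    case True
    define i where "i = p div N"
    have i: "i < s" using pdec[OF p] i_def by simp
    have on: "cinner (col P (i * N + p mod N)) (col P (i * N + q mod N)) = (if p mod N = q mod N then 1 else 0)"
      using pr i pdec(2)[OF p] pdec(2)[OF q] by (simp add: is_agg_prolongation_def)
    have pe: "i * N + p mod N = p" "i * N + q mod N = q"
      using pdec(3)[OF p] pdec(3)[OF q] True i_def by auto
    have eq: "(p mod N = q mod N) = (p = q)" using pe by metis
    have "cinner (col P p) (col P q) = (\<Sum>k<n. cnj (P $$ (k, p)) * P $$ (k, q))"
      using Pc p q unfolding cinner_def by simp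
    thus ?thesis using on unfolding pe eq using p q by simp
  next
    case False
    have "cnj (P $$ (k, p)) * P $$ (k, q) = 0" if k: "k < n" for k
    proof (cases "k \<in> A (p div N)")
      case True
      have "A (p div N) \<inter> A (q div N) = {}"
        using agg False pdec(1)[OF p] pdec(1)[OF q] by (simp add: is_aggregation_def)
      hence "k \<notin> A (q div N)" using True by blast
      thus ?thesis using P_supp[OF q k] by simp
    next
      case False thus ?thesis using P_supp[OF p k] by simp
    qed
    hence "(\<Sum>k<n. cnj (P $$ (k, p)) * P $$ (k, q)) = 0" by (intro sum.neutral) (simp del: mult_eq_0_iff)
    moreover have "p \<noteq> q" using False by auto
    ultimately show ?thesis using p q by simp
  qed
  finally show "(adj P * P) $$ (p, q) = 1\<^sub>m (s * N) $$ (p, q)" .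
qed (use Pc in simp_all)

lemma G5c_carrier: "Gamma5c s A N \<in> carrier_mat (s * N) (s * N)" by (simp add: Gamma5c_def)

lemma G5c_adj: "adj (Gamma5c s A N) = Gamma5c s A N"
proof (rule eq_matI)
  fix i j assume "i < dim_row (Gamma5c s A N)" "j < dim_col (Gamma5c s A N)"
  thus "adj (Gamma5c s A N) $$ (i, j) = Gamma5c s A N $$ (i, j)" by (simp add: Gamma5c_def)
qed (simp_all add: Gamma5c_def)

lemma G5c_sq: "Gamma5c s A N * Gamma5c s A N = 1\<^sub>m (s * N)"
proof (rule eq_matI)
  fix i j assume ij: "i < dim_row (1\<^sub>m (s * N))" "j < dim_col (1\<^sub>m (s * N))"
  hence "i < s * N" "j < s * N" by auto
  thus "(Gamma5c s A N * Gamma5c s A N) $$ (i, j) = 1\<^sub>m (s * N) $$ (i, j)"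
    by (simp add: Gamma5c_def scalar_prod_def row_def col_def sum_delta_r)
qed (simp_all add: Gamma5c_def)

lemma G5_P: "G5m n * P = P * Gamma5c s A N"
proof (rule eq_matI)
  fix k p assume kp: "k < dim_row (P * Gamma5c s A N)" "p < dim_col (P * Gamma5c s A N)"
  hence k: "k < n" and p: "p < s * N" using Pc by (auto simp: Gamma5c_def)
  define g where "g = (if (\<forall>k\<in>A (p div N). spin_of k \<in> {0,1}) then 1 else -1 :: complex)"
  have r: "(P * Gamma5c s A N) $$ (k, p) = P $$ (k, p) * g"
  proof -
    have "(P * Gamma5c s A N) $$ (k, p) = (\<Sum>q = 0..<s * N. P $$ (k, q) *
        (if q = p then (if (\<forall>k\<in>A (q div N). spin_of k \<in> {0,1}) then 1 else -1) else 0))"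
      using Pc k p by (simp add: Gamma5c_def scalar_prod_def row_def col_def)
    also have "\<dots> = P $$ (k, p) * g" unfolding g_def by (rule sum_delta_r[OF p])
    finally show ?thesis .
  qed
  have "sg (spin_of k) * P $$ (k, p) = P $$ (k, p) * g"
  proof (cases "k \<in> A (p div N)")
    case False thus ?thesis using P_supp[OF p k] by simp
  next
    case True
    have cc: "(\<forall>k\<in>A (p div N). spin_of k \<in> {0,1}) \<or> (\<forall>k\<in>A (p div N). spin_of k \<in> {2,3})"
      using comp pdec(1)[OF p] by (simp add: gamma5_compatible_def)
    show ?thesis
    proof (cases "\<forall>k\<in>A (p div N). spin_of k \<in> {0,1}")
      case True
      hence "spin_of k < 2" using \<open>k \<in> A (p div N)\<close> by auto
      moreover have "g = 1" unfolding g_def using True by (rule if_P)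
      ultimately show ?thesis by (simp add: sg_def)
    next
      case False
      hence a: "\<forall>k\<in>A (p div N). spin_of k \<in> {2,3}" using cc by blast
      hence "\<not> spin_of k < 2" using \<open>k \<in> A (p div N)\<close> by auto
      moreover have "g = -1" unfolding g_def using False by (rule if_not_P)
      ultimately show ?thesis by (simp add: sg_def)
    qed
  qed
  thus "(G5m n * P) $$ (k, p) = (P * Gamma5c s A N) $$ (k, p)"
    unfolding r G5m_mult_entry[OF Pc k p] .
qed (use Pc in \<open>simp_all add: G5m_def Gamma5c_def\<close>)

end

theorem lemma3p3:
  fixes Nt Ns s N :: nat and a m0 csw :: real
    and \<gamma> :: "nat \<Rightarrow> complex mat" and U :: "nat \<Rightarrow> nat \<Rightarrow> complex mat"
    and A :: "nat \<Rightarrow> nat set" and v :: "nat \<Rightarrow> complex vec" and P :: "complex mat"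
  defines "n \<equiv> 12 * nsites Nt Ns"
    and "D \<equiv> dirac Nt Ns a m0 csw \<gamma> U"
    and "G5 \<equiv> Gamma5 (nsites Nt Ns) \<gamma>"
    and "G5c \<equiv> Gamma5c s A N"
    and "R \<equiv> adj (Gamma5 (nsites Nt Ns) \<gamma> * P)"
  assumes "Nt > 0" and "Ns > 0" and "a > 0"
    and "gamma_matrices \<gamma>"
    and "\<forall>x < nsites Nt Ns. \<forall>\<mu> < 4. SU3 (U x \<mu>)"
    and "is_aggregation n s A" and "gamma5_compatible s A"
    and "\<forall>l < N. v l \<in> carrier_vec n"
    and "\<forall>i < s. lin_indep n N (\<lambda>l. restr (A i) (v l))"
    and "is_agg_prolongation n s A N v P"
  shows "adj P * D * P = G5c * (R * D * P)
     \<and> (\<forall>Ci Pi. Ci \<in> carrier_mat (s * N) (s * N) \<and> Pi \<in> carrier_mat (s * N) (s * N) \<and>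
           (adj P * D * P) * Ci = 1\<^sub>m (s * N) \<and> Ci * (adj P * D * P) = 1\<^sub>m (s * N) \<and>
           (R * D * P) * Pi = 1\<^sub>m (s * N) \<and> Pi * (R * D * P) = 1\<^sub>m (s * N) \<longrightarrow>
           1\<^sub>m n - P * Ci * adj P * D = 1\<^sub>m n - P * Pi * R * D)
     \<and> adj (R * D * P) = R * D * P
     \<and> adj (G5c * (adj P * D * P)) = G5c * (adj P * D * P)
     \<and> fov (adj P * D * P) \<subseteq> fov D"
proof -
  let ?m = "s * N"
  interpret F: full Nt Ns U \<gamma> a m0 csw
    by unfold_locales (use assms in simp_all)
  interpret Pr: prol n s N A v P
    by unfold_locales (use assms in simp_all)
  have Dc: "D \<in> carrier_mat n n" unfolding D_def n_def by (rule F.D_carrier)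
  have G5eq: "Gamma5 (nsites Nt Ns) \<gamma> = G5m n" unfolding n_def by (rule Gamma5_eq[OF F.gm])
  have herm: "adj (G5m n * D) = G5m n * D" unfolding D_def n_def by (rule F.G5D_herm)
  have Pc: "P \<in> carrier_mat n ?m" by (rule Pr.Pc)
  have Pa: "adj P \<in> carrier_mat ?m n" by (rule adj_carrier[OF Pc])
  have Gc: "G5c \<in> carrier_mat ?m ?m" unfolding G5c_def by (rule Pr.G5c_carrier)
  have G5mc: "G5m n \<in> carrier_mat n n" by (rule G5m_carrier)
  have GG: "G5c * G5c = 1\<^sub>m ?m" unfolding G5c_def by (rule Pr.G5c_sq)
  have GP: "G5m n * P = P * G5c" unfolding G5c_def by (rule Pr.G5_P)
  have R1: "R = G5c * adj P"
    unfolding R_def G5eq GP adj_mult[OF Pc Gc] using Pr.G5c_adj unfolding G5c_def by simp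
  have R2: "R = adj P * G5m n"
    unfolding R_def G5eq adj_mult[OF G5mc Pc] G5m_adj ..
  define C where "C = adj P * D * P"
  define M where "M = R * D * P"
  have PaD: "adj P * D \<in> carrier_mat ?m n" using Pa Dc by (rule mult_carrier_mat)
  have Cc: "C \<in> carrier_mat ?m ?m" unfolding C_def using PaD Pc by (rule mult_carrier_mat)
  have Rc: "R \<in> carrier_mat ?m n" unfolding R1 using Gc Pa by (rule mult_carrier_mat)
  have Mc: "M \<in> carrier_mat ?m ?m" unfolding M_def using mult_carrier_mat[OF Rc Dc] Pc by (rule mult_carrier_mat)
  have MC: "M = G5c * C"
  proof -
    have "M = G5c * adj P * D * P" unfolding M_def R1 ..
    also have "G5c * adj P * D = G5c * (adj P * D)" by (rule assoc_mult_mat[OF Gc Pa Dc])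
    also have "G5c * (adj P * D) * P = G5c * (adj P * D * P)" by (rule assoc_mult_mat[OF Gc PaD Pc])
    finally show ?thesis unfolding C_def .
  qed
  have CM: "C = G5c * M"
  proof -
    have "G5c * M = G5c * (G5c * C)" unfolding MC ..
    also have "\<dots> = (G5c * G5c) * C" by (rule assoc_mult_mat[OF Gc Gc Cc, symmetric])
    also have "\<dots> = C" unfolding GG using Cc by (rule left_mult_one_mat)
    finally show ?thesis ..
  qed
  have GCM: "G5c * C = M"
  proof -
    have "G5c * C = G5c * (G5c * M)" unfolding CM ..
    also have "\<dots> = (G5c * G5c) * M" by (rule assoc_mult_mat[OF Gc Gc Mc, symmetric])
    also have "\<dots> = M" unfolding GG using Mc by (rule left_mult_one_mat)
    finally show ?thesis .
  qed
  have part1: "adj P * D * P = G5c * (R * D * P)" using CM unfolding C_def M_def .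
  have part2: "\<forall>Ci Pi. Ci \<in> carrier_mat (s * N) (s * N) \<and> Pi \<in> carrier_mat (s * N) (s * N) \<and>
           (adj P * D * P) * Ci = 1\<^sub>m (s * N) \<and> Ci * (adj P * D * P) = 1\<^sub>m (s * N) \<and>
           (R * D * P) * Pi = 1\<^sub>m (s * N) \<and> Pi * (R * D * P) = 1\<^sub>m (s * N) \<longrightarrow>
           1\<^sub>m n - P * Ci * adj P * D = 1\<^sub>m n - P * Pi * R * D"
  proof (intro allI impI, elim conjE)
    fix Ci Pi assume Cic: "Ci \<in> carrier_mat ?m ?m" and Pic: "Pi \<in> carrier_mat ?m ?m"
      and h1: "adj P * D * P * Ci = 1\<^sub>m ?m" and h2: "Ci * (adj P * D * P) = 1\<^sub>m ?m"
      and h3: "R * D * P * Pi = 1\<^sub>m ?m" and h4: "Pi * (R * D * P) = 1\<^sub>m ?m"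
    have h2': "Ci * C = 1\<^sub>m ?m" using h2 unfolding C_def .
    have h3': "M * Pi = 1\<^sub>m ?m" using h3 unfolding M_def .
    have PiG: "Pi * G5c \<in> carrier_mat ?m ?m" using Pic Gc by (rule mult_carrier_mat)
    have rinv: "C * (Pi * G5c) = 1\<^sub>m ?m"
    proof -
      have "C * (Pi * G5c) = (G5c * M) * (Pi * G5c)" unfolding CM ..
      also have "\<dots> = G5c * (M * (Pi * G5c))" by (rule assoc_mult_mat[OF Gc Mc PiG])
      also have "M * (Pi * G5c) = (M * Pi) * G5c" by (rule assoc_mult_mat[OF Mc Pic Gc, symmetric])
      also have "\<dots> = G5c" unfolding h3' using Gc by (rule left_mult_one_mat)
      finally show ?thesis unfolding GG .
    qed
    have CiPi: "Ci = Pi * G5c"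
    proof -
      have "Ci = Ci * 1\<^sub>m ?m" using Cic by (simp add: right_mult_one_mat)
      also have "\<dots> = Ci * (C * (Pi * G5c))" unfolding rinv ..
      also have "\<dots> = (Ci * C) * (Pi * G5c)" by (rule assoc_mult_mat[OF Cic Cc PiG, symmetric])
      also have "\<dots> = Pi * G5c" unfolding h2' using PiG by (rule left_mult_one_mat)
      finally show ?thesis .
    qed
    have PPi: "P * Pi \<in> carrier_mat n ?m" using Pc Pic by (rule mult_carrier_mat)
    have "P * Ci * adj P = P * Pi * R"
    proof -
      have "P * Ci = P * Pi * G5c" unfolding CiPi by (rule assoc_mult_mat[OF Pc Pic Gc, symmetric])
      hence "P * Ci * adj P = P * Pi * G5c * adj P" by simp
      also have "\<dots> = P * Pi * (G5c * adj P)" by (rule assoc_mult_mat[OF PPi Gc Pa])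
      finally show ?thesis unfolding R1 .
    qed
    thus "1\<^sub>m n - P * Ci * adj P * D = 1\<^sub>m n - P * Pi * R * D" by simp
  qed
  have Mh: "adj M = M"
  proof -
    have G5D: "G5m n * D \<in> carrier_mat n n" using G5mc Dc by (rule mult_carrier_mat)
    have "M = adj P * G5m n * D * P" unfolding M_def R2 ..
    also have "adj P * G5m n * D = adj P * (G5m n * D)" by (rule assoc_mult_mat[OF Pa G5mc Dc])
    finally have M': "M = adj P * (G5m n * D) * P" .
    have PaG: "adj P * (G5m n * D) \<in> carrier_mat ?m n" using Pa G5D by (rule mult_carrier_mat)
    have "adj M = adj P * adj (adj P * (G5m n * D))" unfolding M' by (rule adj_mult[OF PaG Pc])
    also have "adj (adj P * (G5m n * D)) = (G5m n * D) * P"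
      unfolding adj_mult[OF Pa G5D] herm adj_adj ..
    also have "adj P * ((G5m n * D) * P) = adj P * (G5m n * D) * P"
      by (rule assoc_mult_mat[OF Pa G5D Pc, symmetric])
    finally show ?thesis unfolding M' .
  qed
  have part3: "adj (R * D * P) = R * D * P" using Mh unfolding M_def .
  have part4: "adj (G5c * (adj P * D * P)) = G5c * (adj P * D * P)"
    using Mh GCM unfolding C_def by simp
  have part5: "fov (adj P * D * P) \<subseteq> fov D"
  proof
    fix z assume "z \<in> fov (adj P * D * P)"
    then obtain \<psi> where z: "z = cinner \<psi> ((adj P * D * P) *\<^sub>v \<psi>)"
      and \<psi>c: "\<psi> \<in> carrier_vec (dim_col (adj P * D * P))" and \<psi>1: "cinner \<psi> \<psi> = 1"
      unfolding fov_def by blast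
    have \<psi>c': "\<psi> \<in> carrier_vec ?m" using \<psi>c Pc by simp
    define \<phi> where "\<phi> = P *\<^sub>v \<psi>"
    have \<phi>c: "\<phi> \<in> carrier_vec n" unfolding \<phi>_def using Pc \<psi>c' by (rule mult_mat_vec_carrier)
    have D\<phi>: "D *\<^sub>v \<phi> \<in> carrier_vec n" using Dc \<phi>c by (rule mult_mat_vec_carrier)
    have "cinner \<phi> \<phi> = cinner \<psi> (adj P *\<^sub>v (P *\<^sub>v \<psi>))"
      unfolding \<phi>_def by (rule cinner_adj[OF Pc \<psi>c' mult_mat_vec_carrier[OF Pc \<psi>c']])
    also have "adj P *\<^sub>v (P *\<^sub>v \<psi>) = (adj P * P) *\<^sub>v \<psi>" by (rule assoc_mult_mat_vec[OF Pa Pc \<psi>c', symmetric])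
    also have "\<dots> = \<psi>" unfolding Pr.PHP using \<psi>c' by simp
    finally have n1: "cinner \<phi> \<phi> = 1" using \<psi>1 by simp
    have "(adj P * D * P) *\<^sub>v \<psi> = (adj P * D) *\<^sub>v \<phi>" unfolding \<phi>_def by (rule assoc_mult_mat_vec[OF PaD Pc \<psi>c'])
    also have "\<dots> = adj P *\<^sub>v (D *\<^sub>v \<phi>)" by (rule assoc_mult_mat_vec[OF Pa Dc \<phi>c])
    finally have "z = cinner \<psi> (adj P *\<^sub>v (D *\<^sub>v \<phi>))" using z by simp
    also have "\<dots> = cinner \<phi> (D *\<^sub>v \<phi>)" unfolding \<phi>_def by (rule cinner_adj[OF Pc \<psi>c' D\<phi>[unfolded \<phi>_def], symmetric])
    finally have "z = cinner \<phi> (D *\<^sub>v \<phi>)" .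
    moreover have "\<phi> \<in> carrier_vec (dim_col D)" using \<phi>c Dc by simp
    ultimately show "z \<in> fov D" unfolding fov_def using n1 by blast
  qed
  show ?thesis using part1 part2 part3 part4 part5 by blast
qed

end
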